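(* Consider the flat DAgger algorithm with a halving learner described in the context, learning over the full policy class $\Pi_{\mathrm{FULL}}=\{(\mu,\{\pi_g\}_{g\in\mathcal{G}}):\ \mu\in\mathcal{M},\ \pi_g\in\Pi_{\mathrm{LO}}\}$, where $\mathcal{M}$ and $\Pi_{\mathrm{LO}}$ are finite, and suppose the expert policy is realizable, i.e. $(\mu^\star,\{\pi^\star_g\}_{g\in\mathcal{G}})\in\Pi_{\mathrm{FULL}}$. Then the total cost incurred by the expert in flat DAgger by round $T$ is at most $$T\,C^{I}_{\mathrm{FULL}} + \bigl(\log_2|\mathcal{M}| + |\mathcal{G}|\log_2|\Pi_{\mathrm{LO}}|\bigr)\,C^{L}_{\mathrm{FULL}}.$$
   Context: Setting. There is a state space $\mathcal{S}$, an action space $\mathcal{A}$ and a finite set of subgoals $\mathcal{G}$. A hierarchical policy consists of a meta-controller $\mu:\mathcal{S}\to\mathcal{G}$ and, for each $g\in\mathcal{G}$, a subpolicy $\pi_g$ mapping a state to an action together with a termination signal $\omega\in\{0,1\}$. An episode starts at a start state $s$; repeatedly $g=\mu(s)$ is chosen and $\pi_g$ is rolled out from $s$ until it signals termination, after which $s$ is the last state reached; the concatenation of these low-level trajectories is the full trajectory $\tau_{\mathrm{FULL}}$. The expert has a hierarchical policy $(\mu^\star,\{\pi^\star_g\}_{g\in\mathcal{G}})$. $\mathcal{M}$ is a finite class of meta-controllers and $\Pi_{\mathrm{LO}}$ a finite class of subpolicies; the flat learner treats elements of $\Pi_{\mathrm{FULL}}$ as monolithic policies and is otherwise oblivious to the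 hierarchical structure. Expert operations and costs (per invocation): $\mathrm{Inspect}_{\mathrm{FULL}}(\tau_{\mathrm{FULL}})$ returns Pass/Fail according to whether the overall task was accomplished, cost $C^{I}_{\mathrm{FULL}}$; $\mathrm{Label}_{\mathrm{FULL}}(\tau_{\mathrm{FULL}})$ returns the expert's labels (the expert's high-level and low-level decisions) on every state of the full trajectory, cost $C^{L}_{\mathrm{FULL}}$. The expert is consistent: an episode on which the executed policy agrees with the expert policy at every visited state passes $\mathrm{Inspect}_{\mathrm{FULL}}$. Learner. The halving algorithm over $\Pi_{\mathrm{FULL}}$ maintains a version space (initially $\Pi_{\mathrm{FULL}}$), acts by majority vote of the version space, and upon receiving labeled data removes all policies inconsistent with the labels. Flat DAgger (modified version). In each round $t=1,\dots,T$: obtain a new environment instance, execute the current policy to obtain $\tau_{\mathrm{FULL}}$, and call $\mathrm{Inspect}_{\mathrm{FULL}}(\tau_{\mathrm{FULL}})$; only if it returns Fail, call $\mathrm{Label}_{\mathrm{FULL}}(\tau_{\mathrm{FULL}})$ and add the labels to the data; then update the halving learner. The total expert cost is the sum of costs of all operations invoked. *)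

theory Defs
  imports Complex_Main
begin

text \<open>A hierarchical policy: meta-controller mu :: 's => 'g and subpolicies
  pi :: 'g => 's => ('a action x termination signal).\<close>
type_synonym ('s,'g,'a) hpol = "('s \<Rightarrow> 'g) \<times> ('g \<Rightarrow> 's \<Rightarrow> 'a \<times> bool)"

text \<open>A decision point: the current state together with the active subgoal
  (None = a subgoal boundary, where the meta-controller is queried).\<close>
type_synonym ('s,'g) point = "'s \<times> 'g option"

type_synonym ('g,'a) decision = "'g \<times> ('a \<times> bool)"

type_synonym ('s,'g,'a) traj = "(('s,'g) point \<times> ('g,'a) decision) list"

definition dec :: "('s,'g,'a) hpol \<Rightarrow> ('s,'g) point \<Rightarrow> ('g,'a) decision" where
  "dec h x = (case x of
      (s, None) \<Rightarrow> (fst h s, snd h (fst h s) s)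
    | (s, Some g) \<Rightarrow> (g, snd h g s))"

record ('s,'a) env_inst =
  start :: 's
  trans :: "'s \<Rightarrow> 'a \<Rightarrow> 's"
  horizon :: nat

fun run :: "(('s,'g) point \<Rightarrow> ('g,'a) decision) \<Rightarrow> ('s \<Rightarrow> 'a \<Rightarrow> 's) \<Rightarrow> nat
            \<Rightarrow> ('s,'g) point \<Rightarrow> ('s,'g,'a) traj" where
  "run f tr 0 x = []"
| "run f tr (Suc n) x =
     (let d = f x; g = fst d; a = fst (snd d); w = snd (snd d)
      in (x, d) # run f tr n (tr (fst x) a, if w then None else Some g))"

definition episode :: "(('s,'g) point \<Rightarrow> ('g,'a) decision) \<Rightarrow> ('s,'a) env_inst \<Rightarrow> ('s,'g,'a) traj" where
  "episode f e = run f (trans e) (horizon e) (start e, None)"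

definition full_class :: "('s \<Rightarrow> 'g) set \<Rightarrow> ('s \<Rightarrow> 'a \<times> bool) set \<Rightarrow> ('s,'g,'a) hpol set" where
  "full_class M PiLO = {h. fst h \<in> M \<and> (\<forall>g. snd h g \<in> PiLO)}"

definition mv :: "('s,'g,'a) hpol set \<Rightarrow> ('s,'g) point \<Rightarrow> ('g,'a) decision" where
  "mv V x = (SOME y. \<forall>y'. card {h\<in>V. dec h x = y'} \<le> card {h\<in>V. dec h x = y})"

definition labels :: "('s,'g,'a) hpol \<Rightarrow> ('s,'g,'a) traj \<Rightarrow> (('s,'g) point \<times> ('g,'a) decision) list" where
  "labels ex tau = map (\<lambda>(x,_). (x, dec ex x)) tau"

definition consistent :: "('s,'g,'a) hpol \<Rightarrow> (('s,'g) point \<times> ('g,'a) decision) list \<Rightarrow> bool" where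
  "consistent h L = (\<forall>(x,y)\<in>set L. dec h x = y)"

text \<open>Version space of the halving learner at the start of round t+1 (t = 0,1,...),
  given environment instances envs t and inspection outcomes insp t.\<close>
fun vspace :: "('s \<Rightarrow> 'g) set \<Rightarrow> ('s \<Rightarrow> 'a \<times> bool) set \<Rightarrow> ('s,'g,'a) hpol
   \<Rightarrow> (nat \<Rightarrow> ('s,'a) env_inst) \<Rightarrow> (nat \<Rightarrow> ('s,'g,'a) traj \<Rightarrow> bool) \<Rightarrow> nat \<Rightarrow> ('s,'g,'a) hpol set" where
  "vspace M PiLO ex envs insp 0 = full_class M PiLO"
| "vspace M PiLO ex envs insp (Suc t) =
     (let V = vspace M PiLO ex envs insp t; tau = episode (mv V) (envs t)
      in if insp t tau then V else {h\<in>V. consistent h (labels ex tau)})"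

definition dagger_traj where
  "dagger_traj M PiLO ex envs insp t = episode (mv (vspace M PiLO ex envs insp t)) (envs t)"

definition dagger_cost :: "('s \<Rightarrow> 'g) set \<Rightarrow> ('s \<Rightarrow> 'a \<times> bool) set \<Rightarrow> ('s,'g,'a) hpol
   \<Rightarrow> (nat \<Rightarrow> ('s,'a) env_inst) \<Rightarrow> (nat \<Rightarrow> ('s,'g,'a) traj \<Rightarrow> bool) \<Rightarrow> real \<Rightarrow> real \<Rightarrow> nat \<Rightarrow> real" where
  "dagger_cost M PiLO ex envs insp CI CL T =
     real T * CI + real (card {t. t < T \<and> \<not> insp t (dagger_traj M PiLO ex envs insp t)}) * CL"

end

theory Submission
  imports Defs "HOL-Library.FuncSet"
begin

lemma run_dec: "\<forall>(x,d)\<in>set (run f tr n x0). d = f x"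
  by (induction n arbitrary: x0) (auto simp: Let_def)

lemma mv_max:
  assumes "finite V" "V \<noteq> {}"
  shows "card {h\<in>V. dec h x = y'} \<le> card {h\<in>V. dec h x = mv V x}"
proof -
  have "\<exists>y. \<forall>y'. card {h\<in>V. dec h x = y'} \<le> card {h\<in>V. dec h x = y}"
  proof -
    obtain h0 where "h0 \<in> V" using assms by blast
    have fin: "finite ((\<lambda>h. dec h x) ` V)" using assms by simp
    have ne: "(\<lambda>h. dec h x) ` V \<noteq> {}" using assms by simp
    have bnd: "card {h\<in>V. dec h x = z} < Suc (card V)" for z
      using assms(1) by (simp add: less_Suc_eq_le card_mono)
    obtain y where y: "y \<in> (\<lambda>h. dec h x) ` V"
      and ymax: "\<forall>z. z \<in> (\<lambda>h. dec h x) ` V \<longrightarrow> card {h\<in>V. dec h x = z} \<le> card {h\<in>V. dec h x = y}"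
      using ex_has_greatest_nat[of "\<lambda>z. z \<in> (\<lambda>h. dec h x) ` V" "dec h0 x"
          "\<lambda>z. card {h\<in>V. dec h x = z}" "Suc (card V)"] \<open>h0 \<in> V\<close> bnd
      by blast
    show ?thesis
    proof (intro exI allI)
      fix y'
      show "card {h\<in>V. dec h x = y'} \<le> card {h\<in>V. dec h x = y}"
      proof (cases "y' \<in> (\<lambda>h. dec h x) ` V")
        case True then show ?thesis using ymax by blast
      next
        case False
        then have "{h\<in>V. dec h x = y'} = {}" by blast
        then show ?thesis by (metis card.empty le0)
      qed
    qed
  qed
  then show ?thesis unfolding mv_def by (rule someI_ex[where P="\<lambda>y. \<forall>y'. card {h\<in>V. dec h x = y'} \<le> card {h\<in>V. dec h x = y}", rule_format])
qed

lemma full_class_eq: "full_class M PiLO = M \<times> Pi UNIV (\<lambda>_. PiLO)"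
  unfolding full_class_def by (auto simp: Pi_def)

lemma full_class_card:
  assumes "finite M" "finite PiLO"
  shows "card (full_class M (PiLO :: ('s \<Rightarrow> 'a \<times> bool) set) :: ('s,'g::finite,'a) hpol set)
       = card M * card PiLO ^ card (UNIV :: 'g set)"
proof -
  have "Pi UNIV (\<lambda>_::'g. PiLO) = PiE UNIV (\<lambda>_. PiLO)" by (simp add: PiE_def)
  then show ?thesis using assms
    by (simp add: full_class_eq card_cartesian_product card_PiE)
qed

lemma vspace_sub: "vspace M PiLO ex envs insp t \<subseteq> full_class M PiLO"
  by (induction t) (auto simp: Let_def)

lemma vspace_ex: "ex \<in> full_class M PiLO \<Longrightarrow> ex \<in> vspace M PiLO ex envs insp t"
  by (induction t) (auto simp: Let_def consistent_def labels_def)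

theorem theorem2:
  fixes M :: "('s \<Rightarrow> 'g::finite) set"
    and PiLO :: "('s \<Rightarrow> 'a \<times> bool) set"
    and ex :: "('s,'g,'a) hpol"
    and envs :: "nat \<Rightarrow> ('s,'a) env_inst"
    and insp :: "nat \<Rightarrow> ('s,'g,'a) traj \<Rightarrow> bool"
    and CI CL :: real and T :: nat
  assumes "finite M" and "finite PiLO"
    and "ex \<in> full_class M PiLO"
    and "\<And>t f. (\<forall>(x,d)\<in>set (episode f (envs t)). d = dec ex x) \<Longrightarrow> insp t (episode f (envs t))"
    and "CI \<ge> 0" and "CL \<ge> 0"
  shows "dagger_cost M PiLO ex envs insp CI CL T
         \<le> real T * CI + (log 2 (card M) + real (card (UNIV :: 'g set)) * log 2 (card PiLO)) * CL"
proof -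
  define V where "V t = vspace M PiLO ex envs insp t" for t
  define fl where "fl t = (\<not> insp t (dagger_traj M PiLO ex envs insp t))" for t
  define F where "F t = card {i. i < t \<and> fl i}" for t
  define N where "N = card (full_class M PiLO)"
  have finF: "finite (full_class M PiLO)"
    proof -
    have "Pi UNIV (\<lambda>_::'g. PiLO) = PiE UNIV (\<lambda>_. PiLO)" by (simp add: PiE_def)
    then show ?thesis using assms(1,2) by (simp add: full_class_eq finite_PiE)
  qed
  have finV: "finite (V t)" for t using vspace_sub finF V_def by (metis finite_subset)
  have neV: "V t \<noteq> {}" for t using vspace_ex[OF assms(3)] V_def by blast
  have halve: "2 * card (V (Suc t)) \<le> card (V t)" if "fl t" for t
  proof -
    let ?tau = "episode (mv (V t)) (envs t)"
    have ni: "\<not> insp t ?tau" using that unfolding fl_def dagger_traj_def V_def by simp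
    have "\<not> (\<forall>(x,d)\<in>set ?tau. d = dec ex x)" using ni assms(4)[where t=t and f="mv (V t)"] by blast
    then obtain x d where xd: "(x,d) \<in> set ?tau" "d \<noteq> dec ex x" by blast
    have "d = mv (V t) x" using run_dec[of "mv (V t)" "trans (envs t)" "horizon (envs t)" "(start (envs t), None)"] xd(1) unfolding episode_def by blast
    with xd have neq: "mv (V t) x \<noteq> dec ex x" by simp
    define A where "A = {h\<in>V t. dec h x = dec ex x}"
    define B where "B = {h\<in>V t. dec h x = mv (V t) x}"
    have VS: "V (Suc t) = {h\<in>V t. consistent h (labels ex ?tau)}"
      using ni by (simp add: V_def Let_def)
    have "V (Suc t) \<subseteq> A"
    proof
      fix h assume "h \<in> V (Suc t)"
      then have hV: "h \<in> V t" and hc: "consistent h (labels ex ?tau)" unfolding VS by auto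
      have "(x, dec ex x) \<in> set (labels ex ?tau)" using xd(1) unfolding labels_def by force
      then have "dec h x = dec ex x" using hc unfolding consistent_def by fast
      then show "h \<in> A" using hV unfolding A_def by blast
    qed
    then have c1: "card (V (Suc t)) \<le> card A" using finV[of t] unfolding A_def by (simp add: card_mono)
    have c2: "card A \<le> card B" unfolding A_def B_def using mv_max[OF finV neV] by blast
    have "A \<inter> B = {}" "A \<union> B \<subseteq> V t" using neq by (auto simp: A_def B_def)
    moreover have "finite A" "finite B" using finV[of t] by (auto simp: A_def B_def)
    ultimately have "card A + card B \<le> card (V t)" using finV[of t]
      by (metis card_Un_disjoint card_mono)
    with c1 c2 show ?thesis by linarith
  qed
  have nohalve: "card (V (Suc t)) \<le> card (V t)" for t
    using finV by (auto simp: V_def Let_def intro: card_mono)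
  have Fsuc: "F (Suc t) = F t + (if fl t then 1 else 0)" for t
  proof -
    have "{i. i < Suc t \<and> fl i} = {i. i < t \<and> fl i} \<union> (if fl t then {t} else {})"
      by (auto simp: less_Suc_eq)
    then show ?thesis unfolding F_def by (auto simp: card_insert_if)
  qed
  have main: "2 ^ F t * card (V t) \<le> N" for t
  proof (induction t)
    case 0 then show ?case by (simp add: F_def V_def N_def)
  next
    case (Suc t)
    show ?case
    proof (cases "fl t")
      case True
      then have "2 ^ F (Suc t) * card (V (Suc t)) = 2 ^ F t * (2 * card (V (Suc t)))"
        by (simp add: Fsuc)
      also have "\<dots> \<le> 2 ^ F t * card (V t)" using halve[OF True] by simp
      finally show ?thesis using Suc by linarith
    next
      case False
      then have "2 ^ F (Suc t) * card (V (Suc t)) \<le> 2 ^ F t * card (V t)"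
        using nohalve[of t] by (simp add: Fsuc)
      then show ?thesis using Suc by linarith
    qed
  qed
  have "card (V T) \<ge> 1" using finV neV by (simp add: Suc_le_eq card_gt_0_iff)
  then have "2 ^ F T \<le> N" proof -
    have "2 ^ F T * 1 \<le> 2 ^ F T * card (V T)" using \<open>card (V T) \<ge> 1\<close> by (rule mult_le_mono2)
    then show ?thesis using main[of T] by (metis mult.right_neutral order_trans)
  qed
  then have "real (2 ^ F T) \<le> real N" by linarith
  have Mpos: "card M > 0" using assms(1,3) by (auto simp: full_class_def card_gt_0_iff)
  have Ppos: "card PiLO > 0" using assms(2,3) by (auto simp: full_class_def card_gt_0_iff)
  have "real (F T) = log 2 (2 ^ F T)" by simp
  also have "\<dots> \<le> log 2 (real N)"
  proof -
    have "(0::nat) < 2 ^ F T" by simp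
    then have "0 < real N" using \<open>2 ^ F T \<le> N\<close> by linarith
    then show ?thesis using \<open>real (2 ^ F T) \<le> real N\<close> by (subst log_le_cancel_iff) auto
  qed
  also have "real N = real (card M) * real (card PiLO) ^ card (UNIV :: 'g set)"
    using full_class_card[OF assms(1,2)] N_def by simp
  also have "log 2 \<dots> = log 2 (card M) + real (card (UNIV :: 'g set)) * log 2 (card PiLO)"
    using Mpos Ppos by (simp add: log_mult log_nat_power)
  finally have "real (F T) \<le> log 2 (card M) + real (card (UNIV :: 'g set)) * log 2 (card PiLO)" .
  then have "real (F T) * CL \<le> (log 2 (card M) + real (card (UNIV :: 'g set)) * log 2 (card PiLO)) * CL"
    using assms(6) by (rule mult_right_mono)
  then show ?thesis
    unfolding dagger_cost_def F_def fl_def by simp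
qed

end
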